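(* Let $x$ be a context, $\pi_{\mathrm{old}}(\cdot\mid x)$ a distribution on a finite response set $\mathcal Y(x)$, $r:\mathcal Y(x)\to\mathbb R$ a reward, $\beta>0$, and $G\ge1$. Let $y_1,\dots,y_G$ be i.i.d. from $\pi_{\mathrm{old}}(\cdot\mid x)$, $r_j=r(y_j)$, and \[ \widehat A_i^\beta=r_i-\beta\log\Big(\frac1G\sum_{j=1}^G\exp(r_j/\beta)\Big),\qquad A^\beta(x,y)=\mathbb E\big[\widehat A_i^\beta\mid y_i=y\big] \] (which does not depend on $i$). Then $\mathbb E[\exp(\widehat A_i^\beta/\beta)]=1$ and \[ \mathbb E_{y\sim\pi_{\mathrm{old}}(\cdot\mid x)}\Big[\exp\Big(\frac{A^\beta(x,y)}{\beta}\Big)\Big]\le1 . \] Consequently, with $A=A^\beta$, there is no $\tau>0$ satisfying $\mathbb E_{y\sim\pi_{\mathrm{old}}}\big[\frac1\tau W_0(\tau e^{A^\beta(x,y)/\beta})\big]=1$, i.e. the induced Lambert multiplier satisfies $\tau_s\le0$.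
   Context: $W_0$ denotes the principal branch of the Lambert $W$ function, i.e. the inverse of $w\mapsto we^w$ on $[-1,\infty)$, satisfying $W_0(z)e^{W_0(z)}=z$. *)

theory Defs
  imports "HOL-Probability.Probability"
begin

definition LambertW0 :: "real \<Rightarrow> real" where
  "LambertW0 z = (THE w. -1 \<le> w \<and> w * exp w = z)"

definition group_sample :: "nat \<Rightarrow> 'y pmf \<Rightarrow> (nat \<Rightarrow> 'y) pmf" where
  "group_sample G p = Pi_pmf {..<G} undefined (\<lambda>_. p)"

definition adv_hat :: "('y \<Rightarrow> real) \<Rightarrow> real \<Rightarrow> nat \<Rightarrow> nat \<Rightarrow> (nat \<Rightarrow> 'y) \<Rightarrow> real" where
  "adv_hat r \<beta> G i ys =
     r (ys i) - \<beta> * ln ((1 / real G) * (\<Sum>j<G. exp (r (ys j) / \<beta>)))"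

definition adv_cond :: "'y pmf \<Rightarrow> ('y \<Rightarrow> real) \<Rightarrow> real \<Rightarrow> nat \<Rightarrow> nat \<Rightarrow> 'y \<Rightarrow> real" where
  "adv_cond p r \<beta> G i y =
     measure_pmf.expectation (cond_pmf (group_sample G p) {ys. ys i = y}) (adv_hat r \<beta> G i)"

end

theory Submission
  imports Defs
begin

lemma W0_bounds:
  assumes z: "z > (0::real)"
  shows "0 < LambertW0 z \<and> LambertW0 z < z"
proof -
  have "\<exists>w. 0 \<le> w \<and> w \<le> z \<and> w * exp w = z"
  proof (rule IVT')
    show "0 * exp 0 \<le> z" using z by simp
    have "1 \<le> exp z" using z by simp
    then show "z \<le> z * exp z" using z by (simp add: mult_le_cancel_left1)
    show "0 \<le> z" using z by simp
    show "continuous_on {0..z} (\<lambda>w. w * exp w)" by (intro continuous_intros)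
  qed
  then obtain w0 where w0: "0 \<le> w0" "w0 * exp w0 = z" by blast
  have pos: "w > 0" if "w * exp w = z" for w
  proof (rule ccontr)
    assume "\<not> w > 0"
    then have "w * exp w \<le> 0" by (simp add: mult_nonpos_nonneg)
    with that z show False by simp
  qed
  have w0p: "w0 > 0" using pos w0 by blast
  have uniq: "w = w0" if "-1 \<le> w \<and> w * exp w = z" for w
  proof -
    have wp: "w > 0" using pos that by blast
    show ?thesis
    proof (rule ccontr)
      assume "w \<noteq> w0"
      then consider "w < w0" | "w0 < w" by linarith
      then show False
      proof cases
        case 1
        then have "w * exp w < w0 * exp w0"
          using wp by (intro mult_strict_mono) auto
        then show False using that w0 by simp
      next
        case 2
        then have "w0 * exp w0 < w * exp w"
          using w0p by (intro mult_strict_mono) auto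
        then show False using that w0 by simp
      qed
    qed
  qed
  have "LambertW0 z = w0"
    unfolding LambertW0_def
    by (rule the_equality) (use w0 w0p uniq in auto)
  moreover have "w0 < z"
  proof -
    have "1 < exp w0" using w0p by simp
    then have "w0 * 1 < w0 * exp w0" using w0p by (intro mult_strict_left_mono) auto
    then show ?thesis using w0 by simp
  qed
  ultimately show ?thesis using w0p by simp
qed

lemma exp_jensen_pmf:
  fixes M :: "'a pmf" and f :: "'a \<Rightarrow> real"
  assumes "finite (set_pmf M)"
  shows "exp (measure_pmf.expectation M f) \<le> measure_pmf.expectation M (\<lambda>x. exp (f x))"
proof -
  define m where "m = measure_pmf.expectation M f"
  have int: "integrable M g" for g :: "'a \<Rightarrow> real"
    using assms by (rule integrable_measure_pmf_finite)
  have pt: "exp m + exp m * f x - exp m * m \<le> exp (f x)" for x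
  proof -
    have "1 + (f x - m) \<le> exp (f x - m)" by (rule exp_ge_add_one_self)
    then have "exp m * (1 + (f x - m)) \<le> exp m * exp (f x - m)" by simp
    also have "exp m * exp (f x - m) = exp (f x)" by (simp add: exp_add[symmetric])
    finally show ?thesis by (simp add: algebra_simps)
  qed
  have "measure_pmf.expectation M (\<lambda>x. exp m + exp m * f x - exp m * m)
        \<le> measure_pmf.expectation M (\<lambda>x. exp (f x))"
    by (rule integral_mono[OF int int pt])
  moreover have "measure_pmf.expectation M (\<lambda>x. exp m + exp m * f x - exp m * m) = exp m"
    using int by (simp add: m_def)
  ultimately show ?thesis by (simp add: m_def)
qed

definition swp :: "nat \<Rightarrow> nat \<Rightarrow> nat \<Rightarrow> nat" where
  "swp i j k = (if k = i then j else if k = j then i else k)"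

lemma swp_bij:
  assumes "i < G" "j < G"
  shows "bij_betw (swp i j) {..<G} {..<G}"
  by (rule bij_betw_byWitness[where f'="swp i j"]) (use assms in \<open>auto simp: swp_def\<close>)

lemma swp_out: "i < G \<Longrightarrow> j < G \<Longrightarrow> k \<notin> {..<G} \<Longrightarrow> swp i j k \<notin> {..<G}"
  by (auto simp: swp_def)

lemma adv_hat_swp:
  assumes "i < G" "j < G"
  shows "adv_hat r \<beta> G i (ys \<circ> swp i j) = adv_hat r \<beta> G j ys"
proof -
  have "(\<Sum>k<G. exp (r ((ys \<circ> swp i j) k) / \<beta>)) = (\<Sum>k<G. exp (r (ys k) / \<beta>))"
    using sum.reindex_bij_betw[OF swp_bij[OF assms], of "\<lambda>k. exp (r (ys k) / \<beta>)"]
    by simp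
  then show ?thesis by (simp add: adv_hat_def swp_def)
qed

lemma group_sample_swp:
  assumes "i < G" "j < G"
  shows "group_sample G p = map_pmf (\<lambda>g. g \<circ> swp i j) (group_sample G p)"
  unfolding group_sample_def
  by (rule Pi_pmf_bij_betw) (use swp_bij[OF assms] swp_out[OF assms] in auto)

theorem mainTheorem6:
  fixes p :: "'y pmf" and Y :: "'y set" and r :: "'y \<Rightarrow> real"
    and \<beta> :: real and G :: nat
  assumes "finite Y" and "set_pmf p \<subseteq> Y"
    and "\<beta> > 0" and "G \<ge> 1"
  shows "(\<forall>i<G. \<forall>j<G. \<forall>y\<in>set_pmf p. adv_cond p r \<beta> G i y = adv_cond p r \<beta> G j y)
       \<and> (\<forall>i<G. measure_pmf.expectation (group_sample G p)
                   (\<lambda>ys. exp (adv_hat r \<beta> G i ys / \<beta>)) = 1)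
       \<and> (\<forall>i<G. measure_pmf.expectation p (\<lambda>y. exp (adv_cond p r \<beta> G i y / \<beta>)) \<le> 1)
       \<and> (\<forall>i<G. \<not> (\<exists>\<tau>>0. measure_pmf.expectation p
                   (\<lambda>y. (1 / \<tau>) * LambertW0 (\<tau> * exp (adv_cond p r \<beta> G i y / \<beta>))) = 1))"
proof -
  define q where "q = group_sample G p"
  have finp: "finite (set_pmf p)" using assms(1,2) finite_subset by blast
  have finq: "finite (set_pmf q)"
    unfolding q_def group_sample_def using finp
    by (subst set_Pi_pmf) auto
  have intq: "integrable q g" for g :: "_ \<Rightarrow> real"
    using finq by (rule integrable_measure_pmf_finite)
  have marg: "map_pmf (\<lambda>ys. ys i) q = p" if "i < G" for i
    unfolding q_def group_sample_def using that by (subst Pi_pmf_component) auto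
  have nonempty: "set_pmf q \<inter> {ys. ys i = y} \<noteq> {}" if "i < G" "y \<in> set_pmf p" for i y
  proof -
    have "y \<in> set_pmf (map_pmf (\<lambda>ys. ys i) q)" using marg[OF that(1)] that(2) by simp
    then show ?thesis by auto
  qed
  have swapE: "measure_pmf.expectation q f = measure_pmf.expectation q (\<lambda>ys. f (ys \<circ> swp i j))"
    if "i < G" "j < G" for i j and f :: "_ \<Rightarrow> real"
    using arg_cong[OF group_sample_swp[OF that, of p, folded q_def],
        of "\<lambda>M. measure_pmf.expectation M f"] by simp
  have P1: "adv_cond p r \<beta> G i y = adv_cond p r \<beta> G j y"
    if ij: "i < G" "j < G" and y: "y \<in> set_pmf p" for i j y
  proof -
    have pre: "(\<lambda>g. g \<circ> swp i j) -` {ys. ys i = y} = {ys. ys j = y}"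
      by (auto simp: swp_def)
    have "adv_cond p r \<beta> G i y = measure_pmf.expectation
             (cond_pmf (map_pmf (\<lambda>g. g \<circ> swp i j) q) {ys. ys i = y}) (adv_hat r \<beta> G i)"
      unfolding adv_cond_def q_def using group_sample_swp[OF ij, of p] by simp
    also have "cond_pmf (map_pmf (\<lambda>g. g \<circ> swp i j) q) {ys. ys i = y}
             = map_pmf (\<lambda>g. g \<circ> swp i j) (cond_pmf q {ys. ys j = y})"
      using cond_map_pmf[of q "\<lambda>g. g \<circ> swp i j" "{ys. ys i = y}"] nonempty[OF ij(2) y]
      unfolding pre by blast
    also have "measure_pmf.expectation (map_pmf (\<lambda>g. g \<circ> swp i j) (cond_pmf q {ys. ys j = y}))
                 (adv_hat r \<beta> G i)
             = measure_pmf.expectation (cond_pmf q {ys. ys j = y}) (adv_hat r \<beta> G j)"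
      by (simp add: adv_hat_swp[OF ij])
    finally show ?thesis unfolding adv_cond_def q_def .
  qed

  define e where "e ys k = exp (r (ys k) / \<beta>)" for ys :: "nat \<Rightarrow> 'y" and k
  define S where "S ys = (\<Sum>k<G. e ys k)" for ys
  have Spos: "S ys > 0" for ys
    unfolding S_def e_def using assms(4) by (intro sum_pos) (auto simp: lessThan_empty_iff)
  have S_swp: "S (ys \<circ> swp i j) = S ys" if "i < G" "j < G" for ys i j
    using sum.reindex_bij_betw[OF swp_bij[OF that], of "e ys"]
    unfolding S_def e_def by simp
  have expadv: "exp (adv_hat r \<beta> G i ys / \<beta>) = real G * (e ys i / S ys)" for i ys
  proof -
    have Gp: "real G > 0" using assms(4) by simp
    have "adv_hat r \<beta> G i ys / \<beta> = r (ys i) / \<beta> - ln (S ys / real G)"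
      using assms(3) unfolding adv_hat_def S_def e_def by (simp add: field_simps)
    then have "exp (adv_hat r \<beta> G i ys / \<beta>) = e ys i / (S ys / real G)"
      using Spos[of ys] Gp by (simp add: exp_diff e_def)
    then show ?thesis using Gp by simp
  qed
  have Eeq: "measure_pmf.expectation q (\<lambda>ys. e ys i / S ys)
           = measure_pmf.expectation q (\<lambda>ys. e ys 0 / S ys)" if "i < G" for i
  proof -
    have 0: "0 < G" using assms(4) by simp
    have "measure_pmf.expectation q (\<lambda>ys. e ys i / S ys)
        = measure_pmf.expectation q (\<lambda>ys. e (ys \<circ> swp i 0) i / S (ys \<circ> swp i 0))"
      by (rule swapE[OF that 0])
    also have "\<dots> = measure_pmf.expectation q (\<lambda>ys. e ys 0 / S ys)"
      using S_swp[OF that 0] by (simp add: e_def swp_def)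
    finally show ?thesis .
  qed
  have "(\<Sum>i<G. measure_pmf.expectation q (\<lambda>ys. e ys i / S ys))
        = measure_pmf.expectation q (\<lambda>ys. \<Sum>i<G. e ys i / S ys)"
    by (rule Bochner_Integration.integral_sum[where I="{..<G}" and M="measure_pmf q" and f="\<lambda>i ys. e ys i / S ys", symmetric]) (rule intq)
  also have "\<dots> = measure_pmf.expectation q (\<lambda>ys. 1)"
  proof (rule Bochner_Integration.integral_cong[OF refl])
    fix ys show "(\<Sum>i<G. e ys i / S ys) = 1"
      using Spos[of ys] by (simp add: sum_divide_distrib[symmetric] S_def)
  qed
  also have "\<dots> = 1" by simp
  finally have "(\<Sum>i<G. measure_pmf.expectation q (\<lambda>ys. e ys i / S ys)) = 1" .
  moreover have "(\<Sum>i<G. measure_pmf.expectation q (\<lambda>ys. e ys i / S ys))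
      = (\<Sum>i<G. measure_pmf.expectation q (\<lambda>ys. e ys 0 / S ys))"
    by (rule sum.cong[OF refl]) (rule Eeq, simp)
  ultimately have G1: "real G * measure_pmf.expectation q (\<lambda>ys. e ys 0 / S ys) = 1"
    by simp
  then have P2: "measure_pmf.expectation q (\<lambda>ys. exp (adv_hat r \<beta> G i ys / \<beta>)) = 1"
    if "i < G" for i
  proof -
    have "measure_pmf.expectation q (\<lambda>ys. exp (adv_hat r \<beta> G i ys / \<beta>))
        = measure_pmf.expectation q (\<lambda>ys. real G * (e ys i / S ys))"
      by (simp only: expadv)
    also have "\<dots> = real G * measure_pmf.expectation q (\<lambda>ys. e ys i / S ys)"
      by (rule integral_mult_right_zero)
    also have "\<dots> = 1" using Eeq[OF that] G1 by simp
    finally show ?thesis .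
  qed
  have bindq: "bind_pmf p (\<lambda>y. cond_pmf q {ys. ys i = y}) = q" if i: "i < G" for i
  proof (rule bind_cond_pmf_cancel)
    show "set_pmf q \<inter> {ys. ys i = y} \<noteq> {}" if "y \<in> set_pmf p" for y
      using nonempty[OF i that] .
    show "set_pmf p \<inter> {y. ys i = y} \<noteq> {}" if "ys \<in> set_pmf q" for ys
    proof -
      have "ys i \<in> set_pmf (map_pmf (\<lambda>ys. ys i) q)" using that by simp
      then show ?thesis using marg[OF i] by auto
    qed
    show "measure q {ys. ys i = y} = measure p {y. ys i = y}"
      if "y \<in> set_pmf p" "ys \<in> set_pmf q" "ys i = y" for y ys
    proof -
      have "measure p {y} = measure (map_pmf (\<lambda>ys. ys i) q) {y}" using marg[OF i] by simp
      also have "\<dots> = measure q {ys. ys i = y}" by (simp add: vimage_def)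
      finally show ?thesis using that by simp
    qed
  qed
  have P3: "measure_pmf.expectation p (\<lambda>y. exp (adv_cond p r \<beta> G i y / \<beta>)) \<le> 1"
    if i: "i < G" for i
  proof -
    have fc: "finite (set_pmf (cond_pmf q {ys. ys i = y}))" if "y \<in> set_pmf p" for y
      using nonempty[OF i that] finq by (simp add: set_cond_pmf)
    have "measure_pmf.expectation p (\<lambda>y. exp (adv_cond p r \<beta> G i y / \<beta>))
        = (\<Sum>y\<in>set_pmf p. pmf p y *\<^sub>R exp (adv_cond p r \<beta> G i y / \<beta>))"
      using finp by (intro integral_measure_pmf) auto
    also have "\<dots> \<le> (\<Sum>y\<in>set_pmf p. pmf p y *\<^sub>R measure_pmf.expectation (cond_pmf q {ys. ys i = y})
                         (\<lambda>ys. exp (adv_hat r \<beta> G i ys / \<beta>)))"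
    proof (rule sum_mono)
      fix y assume y: "y \<in> set_pmf p"
      have "exp (adv_cond p r \<beta> G i y / \<beta>)
          = exp (measure_pmf.expectation (cond_pmf q {ys. ys i = y}) (\<lambda>ys. adv_hat r \<beta> G i ys / \<beta>))"
        unfolding adv_cond_def q_def by simp
      also have "\<dots> \<le> measure_pmf.expectation (cond_pmf q {ys. ys i = y})
                         (\<lambda>ys. exp (adv_hat r \<beta> G i ys / \<beta>))"
        by (rule exp_jensen_pmf[OF fc[OF y]])
      finally show "pmf p y *\<^sub>R exp (adv_cond p r \<beta> G i y / \<beta>) \<le> pmf p y *\<^sub>R measure_pmf.expectation (cond_pmf q {ys. ys i = y})
                         (\<lambda>ys. exp (adv_hat r \<beta> G i ys / \<beta>))"
        by (simp add: mult_left_mono)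
    qed
    also have "\<dots> = measure_pmf.expectation (bind_pmf p (\<lambda>y. cond_pmf q {ys. ys i = y}))
                         (\<lambda>ys. exp (adv_hat r \<beta> G i ys / \<beta>))"
      using finp fc by (intro pmf_expectation_bind[symmetric]) auto
    also have "\<dots> = 1" using bindq[OF i] P2[OF i] by simp
    finally show ?thesis .
  qed
  have P4: "\<not> (\<exists>\<tau>>0. measure_pmf.expectation p
                   (\<lambda>y. (1 / \<tau>) * LambertW0 (\<tau> * exp (adv_cond p r \<beta> G i y / \<beta>))) = 1)"
    if i: "i < G" for i
  proof
    assume "\<exists>\<tau>>0. measure_pmf.expectation p
                   (\<lambda>y. (1 / \<tau>) * LambertW0 (\<tau> * exp (adv_cond p r \<beta> G i y / \<beta>))) = 1"
    then obtain \<tau> where tau: "\<tau> > 0" and eq: "measure_pmf.expectation p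
                   (\<lambda>y. (1 / \<tau>) * LambertW0 (\<tau> * exp (adv_cond p r \<beta> G i y / \<beta>))) = 1" by blast
    define c where "c = (\<lambda>y. exp (adv_cond p r \<beta> G i y / \<beta>))"
    have lt: "(1 / \<tau>) * LambertW0 (\<tau> * c y) < c y" for y
    proof -
      have "\<tau> * c y > 0" using tau by (simp add: c_def)
      then have "LambertW0 (\<tau> * c y) < \<tau> * c y" using W0_bounds by blast
      then show ?thesis using tau by (simp add: field_simps)
    qed
    have "measure_pmf.expectation p (\<lambda>y. (1 / \<tau>) * LambertW0 (\<tau> * c y))
        = (\<Sum>y\<in>set_pmf p. pmf p y *\<^sub>R ((1 / \<tau>) * LambertW0 (\<tau> * c y)))"
      using finp by (intro integral_measure_pmf) auto
    also have "\<dots> < (\<Sum>y\<in>set_pmf p. pmf p y *\<^sub>R c y)"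
    proof (rule sum_strict_mono[OF finp])
      show "set_pmf p \<noteq> {}" by (rule set_pmf_not_empty)
      fix y assume "y \<in> set_pmf p"
      then have "pmf p y > 0" by (simp add: pmf_positive)
      then show "pmf p y *\<^sub>R ((1 / \<tau>) * LambertW0 (\<tau> * c y)) < pmf p y *\<^sub>R c y"
        using mult_strict_left_mono[OF lt[of y] \<open>pmf p y > 0\<close>] by simp
    qed
    also have "\<dots> = measure_pmf.expectation p c"
      using finp by (intro integral_measure_pmf[symmetric]) auto
    also have "\<dots> \<le> 1" using P3[OF i] by (simp add: c_def)
    finally show False using eq by (simp add: c_def)
  qed
  show ?thesis using P1 P2 P3 P4 unfolding q_def by blast
qed

end
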